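(* For every finite simplicial complex $K$, the $1$-skeletons of $\mathcal{M}(K)$ and $\mathcal{GM}(K)$ coincide (every matching on $\mathcal{H}(K)$ consisting of at most two edges is acyclic). Consequently the inclusion $\mathcal{M}(K)\hookrightarrow\mathcal{GM}(K)$ induces a surjection on fundamental groups, and if $\mathcal{M}(K)$ is simply connected then so is $\mathcal{GM}(K)$.
   Context: All simplicial complexes are finite abstract simplicial complexes; simplices are nonempty. The Hasse diagram $\mathcal{H}(K)$ of $K$ is the directed graph whose vertices are the simplices of $K$, with an edge $\sigma\to\tau$ whenever $\sigma\subsetneq\tau$ and $\dim\tau=\dim\sigma+1$. A matching on $\mathcal{H}(K)$ is a set $W$ of edges of $\mathcal{H}(K)$, no two sharing a vertex. $W$ is acyclic if the directed graph obtained from $\mathcal{H}(K)$ by reversing every edge in $W$ has no directed cycle. The complex of discrete Morse matchings $\mathcal{M}(K)$ is the simplicial complex whose vertices are the edges of $\mathcal{H}(K)$ and whose simplices are the nonempty acyclic matchings on $\mathcal{H}(K)$. The generalized complex $\mathcal{GM}(K)$ is the simplicial complex whose vertices are the edges of $\mathcal{H}(K)$ and whose simplices are all nonempty matchings on $\mathcal{H}(K)$ (no acyclicity required); thus $\mathcal{M}(K)\subseteq\mathcal{GM}(K)$. *)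

theory Defs
  imports "HOL-Analysis.Analysis"
begin

definition simplicial_complex :: "'v set set \<Rightarrow> bool" where
  "simplicial_complex K \<equiv> finite K \<and>
     (\<forall>\<sigma>\<in>K. \<sigma> \<noteq> {} \<and> finite \<sigma>) \<and>
     (\<forall>\<sigma>\<in>K. \<forall>\<tau>. \<tau> \<subseteq> \<sigma> \<and> \<tau> \<noteq> {} \<longrightarrow> \<tau> \<in> K)"

definition hasse_edges :: "'v set set \<Rightarrow> ('v set \<times> 'v set) set" where
  "hasse_edges K = {(\<sigma>, \<tau>). \<sigma> \<in> K \<and> \<tau> \<in> K \<and> \<sigma> \<subset> \<tau> \<and> card \<tau> = Suc (card \<sigma>)}"

definition hasse_matching :: "'v set set \<Rightarrow> ('v set \<times> 'v set) set \<Rightarrow> bool" where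
  "hasse_matching K W \<equiv> W \<subseteq> hasse_edges K \<and>
     (\<forall>e\<in>W. \<forall>e'\<in>W. e \<noteq> e' \<longrightarrow> {fst e, snd e} \<inter> {fst e', snd e'} = {})"

definition acyclic_matching :: "'v set set \<Rightarrow> ('v set \<times> 'v set) set \<Rightarrow> bool" where
  "acyclic_matching K W \<equiv> acyclic ((hasse_edges K - W) \<union> converse W)"

definition morse_complex :: "'v set set \<Rightarrow> ('v set \<times> 'v set) set set" where
  "morse_complex K = {W. W \<noteq> {} \<and> hasse_matching K W \<and> acyclic_matching K W}"

definition gen_morse_complex :: "'v set set \<Rightarrow> ('v set \<times> 'v set) set set" where
  "gen_morse_complex K = {W. W \<noteq> {} \<and> hasse_matching K W}"

definition one_skeleton :: "'a set set \<Rightarrow> 'a set set" where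
  "one_skeleton L = {\<sigma> \<in> L. card \<sigma> \<le> 2}"

text \<open>Standard geometric realization of a finite abstract simplicial complex L:
  barycentric coordinate functions whose support is a simplex of L, with the
  topology induced from the product topology on 'a \<Rightarrow> real.\<close>
definition geom_real_set :: "'a set set \<Rightarrow> ('a \<Rightarrow> real) set" where
  "geom_real_set L = {x. (\<forall>v. 0 \<le> x v) \<and> {v. x v \<noteq> 0} \<in> L \<and> sum x {v. x v \<noteq> 0} = 1}"

definition geom_real :: "'a set set \<Rightarrow> ('a \<Rightarrow> real) topology" where
  "geom_real L = subtopology (powertop_real UNIV) (geom_real_set L)"

definition path_homotopic :: "'a topology \<Rightarrow> (real \<Rightarrow> 'a) \<Rightarrow> (real \<Rightarrow> 'a) \<Rightarrow> bool" where
  "path_homotopic X p q \<equiv>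
     homotopic_with (\<lambda>r. r 0 = p 0 \<and> r 1 = p 1) (top_of_set {0..1}) X p q"

definition simply_connected_space :: "'a topology \<Rightarrow> bool" where
  "simply_connected_space X \<equiv> path_connected_space X \<and>
     (\<forall>p. pathin X p \<and> p 1 = p 0 \<longrightarrow> path_homotopic X p (\<lambda>_. p 0))"

end

theory Submission
  imports Defs
begin


lemma acyclic_by_potential:
  fixes f :: "'a \<Rightarrow> int"
  assumes "\<And>x y. (x,y) \<in> r \<Longrightarrow> f x < f y"
  shows "acyclic r"
proof -
  have "(x,y) \<in> r\<^sup>+ \<Longrightarrow> f x < f y" for x y
    by (induction rule: trancl_induct) (auto dest: assms)
  then show ?thesis unfolding acyclic_def by fastforce
qed

lemma sc_finite_elem: "simplicial_complex K \<Longrightarrow> \<sigma> \<in> K \<Longrightarrow> finite \<sigma>"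
  unfolding simplicial_complex_def by blast

lemma not_both_faces:
  fixes s1 s2 t1 t2 :: "'v set"
  assumes f: "finite t1" "finite t2"
    and e1: "s1 \<subset> t1" "card t1 = Suc (card s1)"
    and e2: "s2 \<subset> t2" "card t2 = Suc (card s2)"
    and ne: "s1 \<noteq> s2" "t1 \<noteq> t2"
    and c1: "s2 \<subset> t1" and c2: "s1 \<subset> t2"
  shows False
proof -
  have fs1: "finite s1" "finite s2" using f e1 e2 finite_subset by (metis psubset_imp_subset)+
  have "card s2 < card t1" using c1 f psubset_card_mono by blast
  moreover have "card s1 < card t2" using c2 f psubset_card_mono by blast
  ultimately have eqc: "card s1 = card s2" using e1 e2 by linarith
  have "\<not> s2 \<subseteq> s1" using eqc fs1 ne card_subset_eq by metis
  then have ps: "s1 \<subset> s1 \<union> s2" by blast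
  have u1: "s1 \<union> s2 \<subseteq> t1" "s1 \<union> s2 \<subseteq> t2" using c1 c2 e1(1) e2(1) by blast+
  have "card s1 < card (s1 \<union> s2)" using ps fs1 by (intro psubset_card_mono) auto
  then have "card t1 \<le> card (s1 \<union> s2)" "card t2 \<le> card (s1 \<union> s2)" using e1(2) e2(2) eqc by linarith+
  then have "s1 \<union> s2 = t1" "s1 \<union> s2 = t2" using u1 f card_seteq by metis+
  then show False using ne by simp
qed

lemma matching_dis:
  assumes M: "hasse_matching K W" and "e \<in> W" "e' \<in> W" "e \<noteq> e'"
  shows "{fst e, snd e} \<inter> {fst e', snd e'} = {}"
proof -
  have h: "\<forall>e\<in>W. \<forall>e'\<in>W. e \<noteq> e' \<longrightarrow> {fst e, snd e} \<inter> {fst e', snd e'} = {}"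
    using M unfolding hasse_matching_def by (rule conjunct2)
  show ?thesis using h[rule_format, OF assms(2-4)] .
qed

lemma matching_sub:
  assumes M: "hasse_matching K W" and "e \<in> W"
  shows "e \<in> hasse_edges K"
proof -
  have h: "W \<subseteq> hasse_edges K" using M unfolding hasse_matching_def by (rule conjunct1)
  show ?thesis using h assms(2) by (rule subsetD)
qed

lemma acyc_core:
  assumes K: "simplicial_complex K"
    and M: "hasse_matching K W" and W: "W = {e1, e2}"
    and nc: "e1 \<noteq> e2 \<longrightarrow> \<not> fst e2 \<subset> snd e1"
  shows "acyclic_matching K W"
proof -
  obtain s1 t1 s2 t2 where e: "e1 = (s1,t1)" "e2 = (s2,t2)" by (cases e1, cases e2) auto
  have he: "e1 \<in> hasse_edges K" "e2 \<in> hasse_edges K" using matching_sub[OF M] W by simp_all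
  then have h1: "s1 \<subset> t1" "card t1 = Suc (card s1)" and h2: "s2 \<subset> t2" "card t2 = Suc (card s2)"
    using e unfolding hasse_edges_def by simp_all
  have dis: "{s1,t1} \<inter> {s2,t2} = {}" if "e1 \<noteq> e2"
    using matching_dis[OF M, of e1 e2] W e that by simp
  define f :: "'a set \<Rightarrow> int" where "f \<rho> = (if \<rho> = s1 then 6 * int (card \<rho>) + 2 else if \<rho> = t1 then 6 * int (card \<rho>) - 5
     else if \<rho> = s2 then 6 * int (card \<rho>) + 4 else if \<rho> = t2 then 6 * int (card \<rho>) - 3 else 6 * int (card \<rho>))" for \<rho>
  have fb: "6 * int (card \<rho>) - 5 \<le> f \<rho> \<and> f \<rho> \<le> 6 * int (card \<rho>) + 4" for \<rho>
    unfolding f_def by simp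
  have up: "f a < f b" if ab: "(a,b) \<in> hasse_edges K" "(a,b) \<notin> W" for a b
  proof -
    have ab2: "a \<subset> b" "card b = Suc (card a)" using ab unfolding hasse_edges_def by auto
    have n1: "\<not> (a = s1 \<and> b = t1)" "\<not> (a = s2 \<and> b = t2)" using ab W e by auto
    have n3: "e1 \<noteq> e2 \<Longrightarrow> \<not> (a = s2 \<and> b = t1)" using nc e ab2 by auto
    have fa: "6 * int (card a) - 5 \<le> f a" "f a \<le> 6 * int (card a) + 4" using fb by auto
    have cb: "int (card b) = int (card a) + 1" using ab2 by simp
    show ?thesis
    proof (cases "e1 = e2")
      case True
      then have st: "s2 = s1" "t2 = t1" using e by auto
      show ?thesis
      proof (cases "b = s1")
        case True then show ?thesis using fa cb unfolding f_def by simp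
      next
        case bs: False
        show ?thesis
        proof (cases "b = t1")
          case True
          then have "a \<noteq> s1" "a \<noteq> t1" using n1 ab2 by auto
          then have "f a = 6 * int (card a)" unfolding f_def using st by simp
          then show ?thesis using True bs cb unfolding f_def by simp
        next
          case False
          then have "f b = 6 * int (card b)" using bs st unfolding f_def by simp
          then show ?thesis using fa cb by simp
        qed
      qed
    next
      case False
      then have d: "s1 \<noteq> s2" "s1 \<noteq> t2" "t1 \<noteq> s2" "t1 \<noteq> t2" using dis by blast+
      have n4: "\<not> (a = s2 \<and> b = t1)" using n3 False by blast
      consider "b = s1" | "b \<noteq> s1" "b = t1" | "b \<noteq> s1" "b \<noteq> t1" "b = s2"
        | "b \<noteq> s1" "b \<noteq> t1" "b \<noteq> s2" "b = t2" | "b \<noteq> s1" "b \<noteq> t1" "b \<noteq> s2" "b \<noteq> t2" by blast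
      then show ?thesis
      proof cases
        case 1 then show ?thesis using fa cb unfolding f_def by simp
      next
        case 2
        then have "a \<noteq> s1" "a \<noteq> t1" "a \<noteq> s2" using n1 n4 ab2 by auto
        then have "f a \<le> 6 * int (card a)" unfolding f_def by simp
        moreover have "f b = 6 * int (card b) - 5" using 2 unfolding f_def by simp
        ultimately show ?thesis using cb by simp
      next
        case 3 then show ?thesis using fa cb unfolding f_def by simp
      next
        case 4
        then have "a \<noteq> s2" "a \<noteq> t2" using n1 ab2 by auto
        then have "f a \<le> 6 * int (card a) + 2" unfolding f_def by simp
        moreover have "f b = 6 * int (card b) - 3" using 4 unfolding f_def by simp
        ultimately show ?thesis using cb by simp
      next
        case 5
        then have "f b = 6 * int (card b)" unfolding f_def by simp
        then show ?thesis using fa cb by simp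
      qed
    qed
  qed
  have down: "f b < f a" if ab: "(a,b) \<in> W" for a b
  proof -
    have c1: "int (card t1) = int (card s1) + 1" "int (card t2) = int (card s2) + 1" using h1 h2 by simp_all
    have ne: "s1 \<noteq> t1" "s2 \<noteq> t2" using h1 h2 by auto
    have "(a,b) = (s1,t1) \<or> (a,b) = (s2,t2)" using ab W e by simp
    then show ?thesis
    proof
      assume "(a,b) = (s1,t1)"
      then have ab1: "a = s1" "b = t1" by simp_all
      have "f a = 6 * int (card s1) + 2" unfolding f_def ab1 by simp
      moreover have "f b = 6 * int (card t1) - 5" unfolding f_def ab1 using ne by simp
      ultimately show ?thesis using c1 by simp
    next
      assume "(a,b) = (s2,t2)"
      then have ab1: "a = s2" "b = t2" by simp_all
      show ?thesis
      proof (cases "e1 = e2")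
        case True
        then have st: "s2 = s1" "t2 = t1" using e by simp_all
        have "f a = 6 * int (card s1) + 2" unfolding f_def ab1 st by simp
        moreover have "f b = 6 * int (card t1) - 5" unfolding f_def ab1 st using ne by simp
        ultimately show ?thesis using c1 st by simp
      next
        case False
        then have d: "s1 \<noteq> s2" "s1 \<noteq> t2" "t1 \<noteq> s2" "t1 \<noteq> t2" using dis by blast+
        have "f a = 6 * int (card s2) + 4" unfolding f_def ab1 using d by simp
        moreover have "f b = 6 * int (card t2) - 3" unfolding f_def ab1 using d ne by simp
        ultimately show ?thesis using c1 by simp
      qed
    qed
  qed
  show ?thesis unfolding acyclic_matching_def
  proof (rule acyclic_by_potential[of _ f])
    fix x y assume "(x,y) \<in> (hasse_edges K - W) \<union> W\<inverse>"
    then have "((x,y) \<in> hasse_edges K \<and> (x,y) \<notin> W) \<or> (y,x) \<in> W" by simp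
    then show "f x < f y"
    proof
      assume "(x,y) \<in> hasse_edges K \<and> (x,y) \<notin> W"
      then show ?thesis using up by simp
    next
      assume "(y,x) \<in> W"
      then show ?thesis by (rule down)
    qed
  qed
qed

lemma hasse_edges_finite: "simplicial_complex K \<Longrightarrow> finite (hasse_edges K)"
proof -
  assume "simplicial_complex K"
  then have "finite (K \<times> K)" unfolding simplicial_complex_def by auto
  moreover have "hasse_edges K \<subseteq> K \<times> K" unfolding hasse_edges_def by auto
  ultimately show ?thesis by (rule finite_subset[rotated])
qed

lemma part1:
  assumes K: "simplicial_complex K" and M: "hasse_matching K W" and c: "card W \<le> 2"
  shows "acyclic_matching K W"
proof (cases "W = {}")
  case True
  have "acyclic (hasse_edges K)"
    by (rule acyclic_by_potential[of _ "\<lambda>\<rho>. int (card \<rho>)"]) (auto simp: hasse_edges_def)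
  then show ?thesis using True unfolding acyclic_matching_def by simp
next
  case False
  have "W \<subseteq> hasse_edges K" using M unfolding hasse_matching_def by (rule conjunct1)
  then have fin: "finite W" using hasse_edges_finite[OF K] by (rule finite_subset)
  obtain x where x: "x \<in> W" using False by blast
  have cx: "card (W - {x}) \<le> Suc 0" using c x fin by simp
  obtain e1 e2 where W: "W = {e1, e2}"
  proof (cases "W - {x} = {}")
    case True then have "W = {x, x}" using x by blast
    then show ?thesis by (rule that)
  next
    case False
    then obtain y where y: "y \<in> W - {x}" by blast
    have all: "\<forall>a\<in>W-{x}. \<forall>b\<in>W-{x}. a = b"
      using card_le_Suc0_iff_eq[of "W - {x}"] fin cx by simp
    have "W = {x, y}" using all y x by blast
    then show ?thesis by (rule that)
  qed
  show ?thesis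
  proof (cases "e1 \<noteq> e2 \<longrightarrow> \<not> fst e2 \<subset> snd e1")
    case True
    then show ?thesis using acyc_core[OF K M W] by blast
  next
    case False
    have W': "W = {e2, e1}" using W by blast
    obtain s1 t1 s2 t2 where e: "e1 = (s1,t1)" "e2 = (s2,t2)" by (cases e1, cases e2) auto
    have he: "e1 \<in> hasse_edges K" "e2 \<in> hasse_edges K" using matching_sub[OF M] W by simp_all
    then have h1: "s1 \<subset> t1" "card t1 = Suc (card s1)" "t1 \<in> K" and h2: "s2 \<subset> t2" "card t2 = Suc (card s2)" "t2 \<in> K"
      using e unfolding hasse_edges_def by simp_all
    have ne12: "e1 \<noteq> e2" and sub21: "s2 \<subset> t1" using False e by simp_all
    have dis: "{s1,t1} \<inter> {s2,t2} = {}"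
      using matching_dis[OF M, of e1 e2] W e ne12 by simp
    then have d: "s1 \<noteq> s2" "t1 \<noteq> t2" by blast+
    have ft: "finite t1" "finite t2" using sc_finite_elem[OF K] h1(3) h2(3) by simp_all
    have "\<not> s1 \<subset> t2"
      using not_both_faces[OF ft h1(1,2) h2(1,2) d sub21] by blast
    then have "\<not> fst e1 \<subset> snd e2" using e by simp
    then show ?thesis using acyc_core[OF K M W'] by blast
  qed
qed



definition spt :: "('a \<Rightarrow> real) \<Rightarrow> 'a set" where "spt x = {v. x v \<noteq> 0}"

lemma rep_sum:
  fixes c :: "nat \<Rightarrow> real"
  assumes "j < m" "0 \<le> l" "l \<le> 1" "y = real j + l"
  shows "(\<Sum>k\<in>{0..m}. max 0 (1 - \<bar>y - real k\<bar>) * c k) = (1 - l) * c j + l * c (Suc j)"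
proof -
  have z: "max 0 (1 - \<bar>y - real k\<bar>) * c k = 0" if "k \<in> {0..m} - {j, Suc j}" for k
  proof -
    have "k < j \<or> k > Suc j" using that by auto
    then have "\<bar>y - real k\<bar> \<ge> 1" using assms by (auto simp: abs_if)
    then show ?thesis by simp
  qed
  have "(\<Sum>k\<in>{0..m}. max 0 (1 - \<bar>y - real k\<bar>) * c k) = (\<Sum>k\<in>{j, Suc j}. max 0 (1 - \<bar>y - real k\<bar>) * c k)"
    using assms(1) z by (intro sum.mono_neutral_right) auto
  also have "\<dots> = (1 - l) * c j + l * c (Suc j)"
    using assms by (simp add: abs_if max_def)
  finally show ?thesis .
qed

lemma decomp:
  fixes y :: real
  assumes "0 \<le> y" "y \<le> real m" "0 < m"
  shows "\<exists>j<m. \<exists>l. 0 \<le> l \<and> l \<le> 1 \<and> y = real j + l"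
proof (cases "y = real m")
  case True
  then show ?thesis using assms by (intro exI[of _ "m - 1"]) (auto simp: of_nat_diff)
next
  case False
  define j where "j = nat \<lfloor>y\<rfloor>"
  have "real j \<le> y" "y < real j + 1" using assms unfolding j_def by linarith+
  moreover have "j < m" using False assms \<open>real j \<le> y\<close> by (metis linorder_not_le nless_le of_nat_le_iff order.trans)
  ultimately show ?thesis by (intro exI[of _ j]) (auto intro!: exI[of _ "y - real j"])
qed

lemma spt_comb:
  assumes "\<And>v. 0 \<le> c v" "\<And>v. 0 \<le> d v" "0 \<le> \<alpha>" "0 \<le> \<beta>"
  shows "spt (\<lambda>v. \<alpha> * c v + \<beta> * d v) = (if \<alpha> = 0 then {} else spt c) \<union> (if \<beta> = 0 then {} else spt d)"
proof -
  have "(\<alpha> * c v + \<beta> * d v \<noteq> 0) \<longleftrightarrow> (\<alpha> \<noteq> 0 \<and> c v \<noteq> 0) \<or> (\<beta> \<noteq> 0 \<and> d v \<noteq> 0)" for v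
  proof -
    have "0 \<le> \<alpha> * c v" "0 \<le> \<beta> * d v" using assms by auto
    then show ?thesis by (smt (verit) mult_eq_0_iff)
  qed
  then show ?thesis unfolding spt_def by auto
qed

lemma sum_spt:
  assumes "finite E" "spt x \<subseteq> E"
  shows "sum x (spt x) = sum x E"
  using assms by (intro sum.mono_neutral_left) (auto simp: spt_def)

lemma geom_real_eq: "geom_real L = top_of_set (geom_real_set L)"
  unfolding geom_real_def by (simp add: euclidean_product_topology)

lemma path_homotopic_eq: "path_homotopic (geom_real L) p q = homotopic_paths (geom_real_set L) p q"
  unfolding path_homotopic_def homotopic_paths_def geom_real_eq pathstart_def pathfinish_def ..

lemma pathin_eq: "pathin (geom_real L) p = (path p \<and> (\<forall>t\<in>{0..1}. p t \<in> geom_real_set L))"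
  unfolding geom_real_eq pathin_canon_iff by auto

lemma morse_sub: "morse_complex K \<subseteq> gen_morse_complex K"
  unfolding morse_complex_def gen_morse_complex_def by auto

lemma hasse_matching_subset:
  assumes "hasse_matching K W" "X \<subseteq> W" shows "hasse_matching K X"
proof -
  have h1: "W \<subseteq> hasse_edges K" using assms(1)[unfolded hasse_matching_def] by (rule conjunct1)
  have h2: "\<forall>e\<in>W. \<forall>e'\<in>W. e \<noteq> e' \<longrightarrow> {fst e, snd e} \<inter> {fst e', snd e'} = {}"
    using assms(1)[unfolded hasse_matching_def] by (rule conjunct2)
  have "X \<subseteq> hasse_edges K" using h1 assms(2) by (rule subset_trans[rotated])
  moreover have "\<forall>e\<in>X. \<forall>e'\<in>X. e \<noteq> e' \<longrightarrow> {fst e, snd e} \<inter> {fst e', snd e'} = {}"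
  proof (intro ballI impI)
    fix e e' assume "e \<in> X" "e' \<in> X" "e \<noteq> e'"
    then have "e \<in> W" "e' \<in> W" using assms(2) by blast+
    then show "{fst e, snd e} \<inter> {fst e', snd e'} = {}" using \<open>e \<noteq> e'\<close> by (rule h2[rule_format])
  qed
  ultimately show ?thesis unfolding hasse_matching_def by (rule conjI)
qed

lemma gen_sub_E: "W \<in> gen_morse_complex K \<Longrightarrow> W \<subseteq> hasse_edges K"
  unfolding gen_morse_complex_def hasse_matching_def by auto

lemma SG_facts:
  assumes K: "simplicial_complex K" and x: "x \<in> geom_real_set (gen_morse_complex K)"
  shows "\<And>v. 0 \<le> x v" "spt x \<subseteq> hasse_edges K" "sum x (hasse_edges K) = 1"
    "spt x \<in> gen_morse_complex K" "spt x \<noteq> {}" "\<And>v. v \<in> spt x \<longleftrightarrow> 0 < x v"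
proof -
  show nn: "0 \<le> x v" for v using x unfolding geom_real_set_def by blast
  show sg: "spt x \<in> gen_morse_complex K" using x unfolding geom_real_set_def spt_def by auto
  then show se: "spt x \<subseteq> hasse_edges K" by (rule gen_sub_E)
  show "spt x \<noteq> {}" using sg unfolding gen_morse_complex_def by auto
  show "sum x (hasse_edges K) = 1" using x sum_spt[OF hasse_edges_finite[OF K] se]
    unfolding geom_real_set_def spt_def by auto
  show "v \<in> spt x \<longleftrightarrow> 0 < x v" for v using nn[of v] unfolding spt_def by auto
qed

lemma SG_intro:
  assumes K: "simplicial_complex K" and "\<And>v. 0 \<le> x v" "spt x \<in> L" "L \<subseteq> gen_morse_complex K"
    "sum x (hasse_edges K) = 1"
  shows "x \<in> geom_real_set L"
proof -
  have "spt x \<subseteq> hasse_edges K" using assms gen_sub_E by blast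
  then have "sum x (spt x) = 1" using assms sum_spt[OF hasse_edges_finite[OF K]] by simp
  then show ?thesis using assms unfolding geom_real_set_def spt_def by auto
qed

lemma seg_in:
  assumes K: "simplicial_complex K" and L: "L \<subseteq> gen_morse_complex K"
    and x: "x \<in> geom_real_set L" and y: "y \<in> geom_real_set L" and sub: "spt y \<subseteq> spt x"
    and s: "0 \<le> s" "s \<le> 1"
  shows "(\<lambda>v. (1 - s) * x v + s * y v) \<in> geom_real_set L"
proof (cases "s = 1")
  case True
  then show ?thesis using y by simp
next
  case False
  have xg: "x \<in> geom_real_set (gen_morse_complex K)" "y \<in> geom_real_set (gen_morse_complex K)"
    using x y L unfolding geom_real_set_def by auto
  note fx = SG_facts[OF K xg(1)] and fy = SG_facts[OF K xg(2)]
  have spteq: "spt (\<lambda>v. (1 - s) * x v + s * y v) = spt x"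
    using spt_comb[of x y "1 - s" s] fx fy s False sub by auto
  have sptL: "spt x \<in> L" using x unfolding geom_real_set_def spt_def by auto
  have sumE: "sum (\<lambda>v. (1 - s) * x v + s * y v) (hasse_edges K) = 1"
    using fx(3) fy(3) by (simp add: sum.distrib sum_distrib_left[symmetric])
  have nn: "\<And>v. 0 \<le> (1 - s) * x v + s * y v" using fx(1) fy(1) s by simp
  have "spt (\<lambda>v. (1 - s) * x v + s * y v) \<in> L" using spteq sptL by simp
  then show ?thesis by (rule SG_intro[OF K nn _ L sumE])
qed

lemma coord_cont: "path p \<Longrightarrow> continuous_on {0..1} (\<lambda>t. p t v)"
  unfolding path_def by (rule continuous_on_product_then_coordinatewise)

lemma straight_homotopy:
  assumes K: "simplicial_complex K" and L: "L \<subseteq> gen_morse_complex K"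
    and p: "path p" "\<forall>t\<in>{0..1}. p t \<in> geom_real_set L"
    and q: "path q" "\<forall>t\<in>{0..1}. q t \<in> geom_real_set L"
    and sub: "\<forall>t\<in>{0..1}. spt (q t) \<subseteq> spt (p t)"
    and e: "q 0 = p 0" "q 1 = p 1"
  shows "homotopic_paths (geom_real_set L) p q"
  unfolding homotopic_paths
proof (intro exI conjI)
  define h where "h = (\<lambda>z::real\<times>real. \<lambda>v. (1 - fst z) * p (snd z) v + fst z * q (snd z) v)"
  show "continuous_on ({0..1} \<times> {0..1}) h"
    unfolding h_def
  proof (intro continuous_on_coordinatewise_then_product continuous_intros)
    fix v
    show "continuous_on ({0..1} \<times> {0..1}) (\<lambda>x. p (snd x) v)"
      by (rule continuous_on_compose2[OF coord_cont[OF p(1)] continuous_on_snd]) auto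
    show "continuous_on ({0..1} \<times> {0..1}) (\<lambda>x. q (snd x) v)"
      by (rule continuous_on_compose2[OF coord_cont[OF q(1)] continuous_on_snd]) auto
  qed
  show "h \<in> {0..1} \<times> {0..1} \<rightarrow> geom_real_set L"
    unfolding h_def using seg_in[OF K L] p q sub by auto
  show "\<forall>x\<in>{0..1}. h (0, x) = p x" unfolding h_def by simp
  show "\<forall>x\<in>{0..1}. h (1, x) = q x" unfolding h_def by simp
  show "\<forall>t\<in>{0..1}. pathstart (h \<circ> Pair t) = pathstart p \<and> pathfinish (h \<circ> Pair t) = pathfinish p"
    unfolding h_def pathstart_def pathfinish_def using e by (auto simp: algebra_simps)
qed



lemma part3:
  fixes K :: "'v set set"
  assumes K: "simplicial_complex K"
    and a: "a \<in> geom_real_set (morse_complex K)"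
    and p: "path p" "\<forall>t\<in>{0..1}. p t \<in> geom_real_set (gen_morse_complex K)" "p 0 = a" "p 1 = a"
  shows "\<exists>q. path q \<and> (\<forall>t\<in>{0..1}. q t \<in> geom_real_set (morse_complex K)) \<and> q 0 = a \<and> q 1 = a
     \<and> homotopic_paths (geom_real_set (gen_morse_complex K)) p q"
proof -
  define E where "E = hasse_edges K"
  have finE: "finite E" unfolding E_def using hasse_edges_finite[OF K] .
  have SMG: "geom_real_set (morse_complex K) \<subseteq> geom_real_set (gen_morse_complex K)"
    using morse_sub unfolding geom_real_set_def by blast
  have aG: "a \<in> geom_real_set (gen_morse_complex K)" using a SMG by blast
  note af = SG_facts[OF K aG, folded E_def]
  have pG: "p t \<in> geom_real_set (gen_morse_complex K)" if "t \<in> {0..1}" for t using p(2) that by blast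
  note pf = SG_facts[OF K pG, folded E_def]
  have aM: "spt a \<in> morse_complex K" using a unfolding geom_real_set_def spt_def by blast
  obtain u where u: "u \<in> spt a" using af(5) by blast
  have small: "X \<in> morse_complex K" if "t \<in> {0..1}" "X \<subseteq> spt (p t)" "X \<noteq> {}" "card X \<le> 2" for t X
  proof -
    have "spt (p t) \<in> gen_morse_complex K" using pf(4)[OF that(1)] .
    then have "hasse_matching K (spt (p t))" unfolding gen_morse_complex_def by auto
    then have hm: "hasse_matching K X" using that(2) by (rule hasse_matching_subset)
    then show ?thesis using part1[OF K hm that(4)] that(3) unfolding morse_complex_def by auto
  qed
  have "\<exists>A. open A \<and> A \<inter> {0..1} = (\<lambda>t. p t v) -` {0<..} \<inter> {0..1}" for v
    using coord_cont[OF p(1), of v] continuous_on_open_invariant open_greaterThan by blast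
  then obtain A where A: "\<And>v. open (A v)" "\<And>v. A v \<inter> {0..1} = (\<lambda>t. p t v) -` {0<..} \<inter> {0..1}" by metis
  have Amem: "t \<in> A v \<longleftrightarrow> 0 < p t v" if "t \<in> {0..1}" for t v
    using A(2)[of v] that by blast
  have cover: "{0..1} \<subseteq> \<Union>(range A)"
  proof
    fix t :: real assume t: "t \<in> {0..1}"
    obtain v where "v \<in> spt (p t)" using pf(5)[OF t] by blast
    then have "0 < p t v" using pf(6)[OF t] by blast
    then show "t \<in> \<Union>(range A)" using Amem t by blast
  qed
  have opn: "\<And>G. G \<in> range A \<Longrightarrow> open G" using A(1) by auto
  obtain e where e: "0 < e" "\<And>t. t \<in> {0..1} \<Longrightarrow> \<exists>G\<in>range A. ball t e \<subseteq> G"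
    using Heine_Borel_lemma[OF compact_Icc cover opn] by blast
  have "\<forall>t\<in>{0..1}. \<exists>v. \<forall>s\<in>{0..1}. dist t s < e \<longrightarrow> 0 < p s v"
  proof
    fix t :: real assume t: "t \<in> {0..1}"
    obtain v where v: "ball t e \<subseteq> A v" using e(2)[OF t] by blast
    show "\<exists>v. \<forall>s\<in>{0..1}. dist t s < e \<longrightarrow> 0 < p s v"
    proof (intro exI ballI impI)
      fix s assume s: "s \<in> {0..1}" "dist t s < e"
      then have "s \<in> A v" using v by auto
      then show "0 < p s v" using Amem[OF s(1)] by blast
    qed
  qed
  then obtain vf where vf: "\<And>t s. t \<in> {0..1} \<Longrightarrow> s \<in> {0..1} \<Longrightarrow> dist t s < e \<Longrightarrow> 0 < p s (vf t)"
    by metis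
  define Oset where "Oset = (\<Inter>v\<in>spt a. A v)"
  have finsa: "finite (spt a)" using af(2) finE finite_subset by blast
  have "open Oset" using finsa A(1) unfolding Oset_def by (auto intro: open_INT)
  have "0 \<in> Oset" "1 \<in> Oset" unfolding Oset_def using Amem af(6) p(3,4) by auto
  obtain r0 where r0: "0 < r0" "ball 0 r0 \<subseteq> Oset"
    using \<open>open Oset\<close> \<open>0 \<in> Oset\<close> open_contains_ball by blast
  obtain r1 where r1: "0 < r1" "ball 1 r1 \<subseteq> Oset"
    using \<open>open Oset\<close> \<open>1 \<in> Oset\<close> open_contains_ball by blast
  have ends: "spt a \<subseteq> spt (p t)" if "t \<in> {0..1}" "t < r0 \<or> 1 - r1 < t" for t
  proof
    fix v assume v: "v \<in> spt a"
    have "t \<in> ball 0 r0 \<or> t \<in> ball 1 r1" using that by (auto simp: dist_real_def)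
    then have "t \<in> Oset" using r0 r1 by blast
    then have "t \<in> A v" using v Oset_def by auto
    then have "0 < p t v" using Amem that(1) by blast
    then show "v \<in> spt (p t)" unfolding spt_def by auto
  qed
  obtain m :: nat where m: "3 \<le> m" "1 / real m < e" "2 / real m < r0" "2 / real m < r1"
  proof -
    obtain N :: nat where N: "max 3 (max (1/e) (max (2/r0) (2/r1))) < real N"
      using reals_Archimedean2 by blast
    have N3: "3 < real N" using N by linarith
    have "1/e < real N" "2/r0 < real N" "2/r1 < real N" using N by linarith+
    then have "1 / real N < e" "2 / real N < r0" "2 / real N < r1"
      using e(1) r0(1) r1(1) N3 by (auto simp: field_simps)
    moreover have "3 \<le> N" using N3 by linarith
    ultimately show ?thesis using that by blast
  qed
  have mpos: "0 < real m" using m by auto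
  define V where "V k = (if k \<le> 1 \<or> m - 1 \<le> k then u else vf (real k / real m))" for k
  define S where "S k = (if k = 0 \<or> k = m then spt a else {V k})" for k
  define w where "w k = (if k = 0 \<or> k = m then a else (\<lambda>v. if v = V k then 1 else 0))" for k
  have good: "S k \<subseteq> spt (p t)" if k: "k \<le> m" and t: "t \<in> {0..1}" and d: "\<bar>real m * t - real k\<bar> < 1" for k t
  proof -
    have lo: "(real k - 1) / real m < t" and hi: "t < (real k + 1) / real m"
      using d mpos by (auto simp: field_simps abs_less_iff)
    consider "k = 0" | "k = m" | "k = 1" | "k = m - 1" | "2 \<le> k" "k \<le> m - 2" using k m(1) by linarith
    then show ?thesis
    proof cases
      case 1
      then have "t < r0" using hi m(3) mpos by (smt (verit) divide_right_mono of_nat_0)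
      then show ?thesis using ends t 1 unfolding S_def by auto
    next
      case 2
      have "(real m - 1) / real m = 1 - 1 / real m" using mpos by (simp add: field_simps)
      then have "1 - r1 < t" using lo 2 m(4) mpos by (smt (verit) divide_right_mono)
      then show ?thesis using ends t 2 unfolding S_def by auto
    next
      case 3
      then have "t < r0" using hi m(3) by simp
      then have "spt a \<subseteq> spt (p t)" using ends t by auto
      then show ?thesis using 3 m(1) u unfolding S_def V_def by auto
    next
      case 4
      have "(real (m - 1) - 1) / real m = 1 - 2 / real m" using mpos m(1) by (simp add: field_simps of_nat_diff)
      then have "1 - r1 < t" using lo 4 m(4) by simp
      then have "spt a \<subseteq> spt (p t)" using ends t by auto
      then show ?thesis using 4 m(1) u unfolding S_def V_def by auto
    next
      case 5
      have km: "real k / real m \<in> {0..1}" using k mpos by (auto simp: field_simps)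
      have "dist (real k / real m) t < e"
      proof -
        have "dist (real k / real m) t = \<bar>real m * t - real k\<bar> / real m"
          using mpos by (simp add: dist_real_def field_simps abs_minus_commute)
        also have "\<dots> < 1 / real m" using d mpos by (simp add: divide_strict_right_mono)
        finally show ?thesis using m(2) by simp
      qed
      then have "0 < p t (vf (real k / real m))" using vf km t by blast
      moreover have "S k = {vf (real k / real m)}" using 5 m(1) unfolding S_def V_def by auto
      ultimately show ?thesis unfolding spt_def by auto
    qed
  qed
  have Sne: "S k \<noteq> {}" for k using af(5) unfolding S_def by auto
  have w_nn: "0 \<le> w k v" for k v using af(1) unfolding w_def by auto
  have w_spt: "spt (w k) = S k" for k unfolding w_def S_def spt_def by auto
  have w_sum: "sum (w k) E = 1" if "k \<le> m" for k
  proof (cases "k = 0 \<or> k = m")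
    case True then show ?thesis using af(3) unfolding w_def by auto
  next
    case False
    have "S k \<subseteq> spt (p (real k / real m))"
      using good[OF that] that mpos by (auto simp: field_simps)
    then have "V k \<in> E" using pf(2)[of "real k / real m"] that mpos False unfolding S_def
      by (auto simp: field_simps)
    then show ?thesis using False finE unfolding w_def by simp
  qed
  define q where "q t = (\<lambda>v. \<Sum>k\<in>{0..m}. max 0 (1 - \<bar>real m * t - real k\<bar>) * w k v)" for t
  have qrep: "\<exists>j<m. \<exists>l. 0 \<le> l \<and> l \<le> 1 \<and> real m * t = real j + l \<and> q t = (\<lambda>v. (1 - l) * w j v + l * w (Suc j) v)"
    if t: "t \<in> {0..1}" for t
  proof -
    have "0 \<le> real m * t" "real m * t \<le> real m" using t mpos by auto
    then obtain j l where jl: "j < m" "0 \<le> l" "l \<le> 1" "real m * t = real j + l"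
      using decomp[of "real m * t" m] mpos by auto
    have "q t = (\<lambda>v. (1 - l) * w j v + l * w (Suc j) v)"
      unfolding q_def by (rule ext, rule rep_sum[OF jl])
    then show ?thesis using jl by blast
  qed
  have q0: "q 0 = a"
  proof
    fix v
    have "q 0 v = (1 - 0) * w 0 v + 0 * w (Suc 0) v"
      unfolding q_def by (rule rep_sum) (use m(1) in auto)
    then show "q 0 v = a v" unfolding w_def by simp
  qed
  have q1: "q 1 = a"
  proof
    fix v
    have "q 1 v = (1 - 1) * w (m - 1) v + 1 * w (Suc (m - 1)) v"
      unfolding q_def by (rule rep_sum) (use m(1) in \<open>auto simp: of_nat_diff\<close>)
    then show "q 1 v = a v" unfolding w_def using m(1) by simp
  qed
  have qin: "q t \<in> geom_real_set (morse_complex K) \<and> spt (q t) \<subseteq> spt (p t)" if t: "t \<in> {0..1}" for t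
  proof -
    obtain j l where jl: "j < m" "0 \<le> l" "l \<le> 1" "real m * t = real j + l"
      and qt: "q t = (\<lambda>v. (1 - l) * w j v + l * w (Suc j) v)" using qrep[OF t] by blast
    have sq: "spt (q t) = (if 1 - l = 0 then {} else S j) \<union> (if l = 0 then {} else S (Suc j))"
      unfolding qt using spt_comb[of "w j" "w (Suc j)" "1 - l" l] jl w_nn w_spt by simp
    have A1: "S j \<subseteq> spt (p t)" if "1 - l \<noteq> 0"
      using good[of j t] jl t that by auto
    have A2: "S (Suc j) \<subseteq> spt (p t)" if "l \<noteq> 0"
      using good[of "Suc j" t] jl t that by auto
    have sub: "spt (q t) \<subseteq> spt (p t)" using sq A1 A2 by auto
    have ne: "spt (q t) \<noteq> {}" using sq Sne by auto
    have S1: "S 1 = {u}" "S (m - 1) = {u}" using m(1) unfolding S_def V_def by auto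
    have inM: "spt (q t) \<in> morse_complex K"
    proof (cases "spt (q t) = spt a")
      case True then show ?thesis using aM by simp
    next
      case False
      have j0: "j \<noteq> 0" if "1 - l \<noteq> 0"
      proof
        assume "j = 0"
        then have "spt (q t) = spt a" using sq that S1 u unfolding S_def by auto
        then show False using False by simp
      qed
      have jm: "Suc j \<noteq> m" if "l \<noteq> 0"
      proof
        assume "Suc j = m"
        then have "j = m - 1" by simp
        then have "spt (q t) = spt a" using sq that S1 u \<open>Suc j = m\<close> unfolding S_def by auto
        then show False using False by simp
      qed
      have "spt (q t) \<subseteq> {V j, V (Suc j)}"
        using sq j0 jm jl(1) unfolding S_def by auto
      then have "card (spt (q t)) \<le> card {V j, V (Suc j)}" by (rule card_mono[rotated]) simp
      also have "\<dots> \<le> 2" by (simp add: card_insert_if)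
      finally show ?thesis using small[OF t sub ne] by blast
    qed
    have sumq: "sum (q t) E = 1"
      using w_sum[of j] w_sum[of "Suc j"] jl(1) unfolding qt
      by (simp add: sum.distrib sum_distrib_left[symmetric])
    have nnq: "0 \<le> q t v" for v using w_nn jl unfolding qt by simp
    show ?thesis using SG_intro[OF K nnq inM morse_sub sumq[unfolded E_def]] sub by blast
  qed
  have pathq: "path q"
    unfolding path_def q_def by (intro continuous_on_coordinatewise_then_product continuous_intros)
  have hom: "homotopic_paths (geom_real_set (gen_morse_complex K)) p q"
  proof -
    have qG: "\<forall>t\<in>{0..1}. q t \<in> geom_real_set (gen_morse_complex K)" using qin SMG by blast
    have "\<forall>t\<in>{0..1}. spt (q t) \<subseteq> spt (p t)" using qin by blast
    then show ?thesis using straight_homotopy[OF K subset_refl p(1) p(2) pathq qG] q0 q1 p(3,4) by simp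
  qed
  show ?thesis using pathq qin q0 q1 hom by blast
qed



lemma hp_rid_c:
  assumes "path p" "path_image p \<subseteq> S"
  shows "homotopic_paths S (p +++ (\<lambda>_. pathfinish p)) p"
proof -
  have \<section>: "continuous_on {0..1} (\<lambda>t::real. if t \<le> 1/2 then 2 *\<^sub>R t else 1)"
    unfolding split_01
    by (rule continuous_on_cases continuous_intros | force simp: pathfinish_def joinpaths_def)+
  show ?thesis
    apply (rule homotopic_paths_sym)
    using assms unfolding pathfinish_def joinpaths_def
    by (intro \<section> continuous_on_cases continuous_intros homotopic_paths_reparametrize [where f = "\<lambda>t. if t \<le> 1/2 then 2 *\<^sub>R t else 1"]; force)
qed

lemma hp_lid_c:
  assumes "path p" "path_image p \<subseteq> S"
  shows "homotopic_paths S ((\<lambda>_. pathstart p) +++ p) p"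
proof -
  have \<section>: "continuous_on {0..1} (\<lambda>t::real. if t \<le> 1/2 then 0 else 2 * t - 1)"
    unfolding split_01
    by (rule continuous_on_cases continuous_intros | force)+
  show ?thesis
    apply (rule homotopic_paths_sym)
    using assms unfolding pathstart_def joinpaths_def
    by (intro \<section> homotopic_paths_reparametrize [where f = "\<lambda>t. if t \<le> 1/2 then 0 else 2 * t - 1"]; force)
qed

lemma hp_rinv_c:
  assumes "path p" "path_image p \<subseteq> S"
    shows "homotopic_paths S (p +++ reversepath p) (\<lambda>_. pathstart p)"
proof -
  have p: "continuous_on {0..1} p" 
    using assms by (auto simp: path_def)
  let ?A = "{0..1} \<times> {0..1}"
  have "continuous_on ?A (\<lambda>x. if snd x \<le> 1/2 then p (fst x * (2 * snd x)) else p (fst x * (1 - (2 * snd x - 1))))"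
  proof (rule continuous_on_cases_le)
    show "continuous_on {x \<in> ?A. snd x \<le> 1/2} (\<lambda>t. p (fst t * (2 * snd t)))"
         "continuous_on {x \<in> ?A. 1/2 \<le> snd x} (\<lambda>t. p (fst t * (1 - (2 * snd t - 1))))"
         "continuous_on ?A snd"
      by (intro continuous_on_compose2 [OF p] continuous_intros; auto simp: mult_le_one)+
  qed (auto simp: algebra_simps)
  then show ?thesis
    using assms
    apply (subst homotopic_paths_sym_eq)
    unfolding homotopic_paths_def homotopic_with_def
    apply (rule_tac x="\<lambda>y. if snd y \<le> 1/2 then p (fst y * (2 * snd y)) else p (fst y * (1 - (2 * snd y - 1)))" in exI)
    apply (force simp: mult_le_one path_defs joinpaths_def reversepath_def)
    done
qed

lemma hp_linv_c:
  assumes "path p" "path_image p \<subseteq> S"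
    shows "homotopic_paths S (reversepath p +++ p) (\<lambda>_. pathfinish p)"
  using hp_rinv_c [of "reversepath p" S] assms by simp

lemma vertex_in:
  fixes K :: "'v set set"
  assumes K: "simplicial_complex K" and x: "x \<in> geom_real_set (gen_morse_complex K)" and v: "v \<in> spt x"
  shows "(\<lambda>w. if w = v then 1 else 0) \<in> geom_real_set (morse_complex K)"
proof -
  note xf = SG_facts[OF K x]
  have hx: "hasse_matching K (spt x)" using xf(4) unfolding gen_morse_complex_def by simp
  have "{v} \<subseteq> spt x" using v by simp
  with hx have hm: "hasse_matching K {v}" by (rule hasse_matching_subset)
  have c1: "card {v} \<le> 2" by simp
  have vM: "{v} \<in> morse_complex K" using part1[OF K hm c1] hm unfolding morse_complex_def by simp
  have sp: "spt (\<lambda>w. if w = v then 1 else (0::real)) = {v}" unfolding spt_def by auto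
  have vE: "v \<in> hasse_edges K" using xf(2) v by blast
  have nn: "\<And>w. 0 \<le> (if w = v then 1 else (0::real))" by simp
  have sumv: "sum (\<lambda>w. if w = v then 1 else (0::real)) (hasse_edges K) = 1"
    using vE hasse_edges_finite[OF K] by simp
  have "spt (\<lambda>w. if w = v then 1 else (0::real)) \<in> morse_complex K" using sp vM by simp
  then show ?thesis by (rule SG_intro[OF K nn _ morse_sub sumv])
qed

lemma seg_path:
  fixes K :: "'v set set"
  assumes K: "simplicial_complex K" and x: "x \<in> geom_real_set (gen_morse_complex K)" and v: "v \<in> spt x"
  defines "d \<equiv> (\<lambda>w. if w = v then 1 else 0)"
  defines "g \<equiv> (\<lambda>s. \<lambda>w. (1 - (1 - s)) * x w + (1 - s) * d w)"
  shows "path g" "path_image g \<subseteq> geom_real_set (gen_morse_complex K)" "pathstart g = d" "pathfinish g = x"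
proof -
  show "path g" unfolding path_def g_def by (intro continuous_on_coordinatewise_then_product continuous_intros)
  have dG: "d \<in> geom_real_set (gen_morse_complex K)"
    using vertex_in[OF K x v] morse_sub unfolding d_def geom_real_set_def by blast
  have sd: "spt d \<subseteq> spt x" using v unfolding d_def spt_def by auto
  have "g s \<in> geom_real_set (gen_morse_complex K)" if s: "s \<in> {0..1}" for s
  proof -
    have "0 \<le> 1 - s" "1 - s \<le> 1" using s by auto
    from seg_in[OF K subset_refl x dG sd this] show ?thesis unfolding g_def .
  qed
  then show "path_image g \<subseteq> geom_real_set (gen_morse_complex K)"
    unfolding path_image_def by blast
  show "pathstart g = d" unfolding pathstart_def g_def by simp
  show "pathfinish g = x" unfolding pathfinish_def g_def by simp
qed

lemma part4:
  fixes K :: "'v set set"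
  assumes K: "simplicial_complex K"
    and sc: "simply_connected_space (geom_real (morse_complex K))"
  shows "simply_connected_space (geom_real (gen_morse_complex K))"
proof -
  define SG where "SG = geom_real_set (gen_morse_complex K)"
  define SM where "SM = geom_real_set (morse_complex K)"
  have SMG: "SM \<subseteq> SG" using morse_sub unfolding SM_def SG_def geom_real_set_def by blast
  have pcM: "path_connected SM" using sc unfolding simply_connected_space_def geom_real_eq SM_def by simp
  have loopM: "homotopic_paths SM q (\<lambda>_. q 0)" if "path q" "\<forall>t\<in>{0..1}. q t \<in> SM" "q 1 = q 0" for q
    using sc that unfolding simply_connected_space_def path_homotopic_eq pathin_eq SM_def by blast
  have vx: "\<exists>v. v \<in> spt x" if "x \<in> SG" for x using SG_facts(5)[OF K that[unfolded SG_def]] by blast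
  have pc: "path_component SG x (\<lambda>w. if w = v then 1 else 0)" if "x \<in> SG" "v \<in> spt x" for x v
  proof -
    let ?g = "\<lambda>s. \<lambda>w. (1 - (1 - s)) * x w + (1 - s) * (if w = v then 1 else (0::real))"
    note s = seg_path[OF K that[unfolded SG_def]]
    have r: "path (reversepath ?g)" "path_image (reversepath ?g) \<subseteq> SG"
      "pathstart (reversepath ?g) = x" "pathfinish (reversepath ?g) = (\<lambda>w. if w = v then 1 else 0)"
      using s unfolding SG_def by simp_all
    show ?thesis unfolding path_component_def
      by (rule exI[of _ "reversepath ?g"]) (intro conjI r)
  qed
  have "path_connected SG"
    unfolding path_connected_component
  proof (intro ballI)
    fix x y assume xy: "x \<in> SG" "y \<in> SG"
    obtain v where v: "v \<in> spt x" using vx xy by blast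
    obtain v' where v': "v' \<in> spt y" using vx xy by blast
    have "(\<lambda>w. if w = v then 1 else 0) \<in> SM" "(\<lambda>w. if w = v' then 1 else 0) \<in> SM"
      using vertex_in[OF K _ v] vertex_in[OF K _ v'] xy unfolding SM_def SG_def by auto
    then have "path_component SM (\<lambda>w. if w = v then 1 else 0) (\<lambda>w. if w = v' then 1 else 0)"
      using pcM unfolding path_connected_component by blast
    then have "path_component SG (\<lambda>w. if w = v then 1 else 0) (\<lambda>w. if w = v' then 1 else 0)"
      by (rule path_component_of_subset[OF SMG])
    then show "path_component SG x y"
      by (rule path_component_trans[OF pc[OF xy(1) v] path_component_trans[OF _ path_component_sym[OF pc[OF xy(2) v']]]])
  qed
  note pcG = \<open>path_connected SG\<close>
  have loop: "homotopic_paths SG p (\<lambda>_. p 0)" if p: "path p" "path_image p \<subseteq> SG" "p 1 = p 0" for p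
  proof -
    define x where "x = p 0"
    have xS: "x \<in> SG" using p unfolding x_def path_image_def by auto
    obtain v where v: "v \<in> spt x" using vx xS by blast
    define d where "d = (\<lambda>w. if w = v then 1 else (0::real))"
    define g where "g = (\<lambda>s. \<lambda>w. (1 - (1 - s)) * x w + (1 - s) * d w)"
    have g: "path g" "path_image g \<subseteq> SG" "pathstart g = d" "pathfinish g = x"
      using seg_path[OF K xS[unfolded SG_def] v] unfolding g_def d_def SG_def by auto
    have dM: "d \<in> SM" using vertex_in[OF K _ v] xS unfolding d_def SM_def SG_def by auto
    have ps: "pathstart p = x" "pathfinish p = x" using p unfolding x_def pathstart_def pathfinish_def by auto
    define l where "l = g +++ (p +++ reversepath g)"
    have lp: "path l" using g p ps unfolding l_def by auto
    have li: "path_image l \<subseteq> SG" unfolding l_def using g p ps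
      by (metis path_image_reversepath subset_path_image_join)
    have l0: "l 0 = d" "l 1 = d" using g ps unfolding l_def pathstart_def pathfinish_def
      by (auto simp: joinpaths_def reversepath_def)
    have li': "\<forall>t\<in>{0..1}. l t \<in> geom_real_set (gen_morse_complex K)"
      using li unfolding path_image_def SG_def by blast
    have "\<exists>q. path q \<and> (\<forall>t\<in>{0..1}. q t \<in> SM) \<and> q 0 = d \<and> q 1 = d \<and> homotopic_paths SG l q"
      using part3[OF K dM[unfolded SM_def] lp li' l0] unfolding SM_def SG_def .
    then obtain q where q: "path q" "\<forall>t\<in>{0..1}. q t \<in> SM" "q 0 = d" "q 1 = d" "homotopic_paths SG l q"
      by blast
    have "homotopic_paths SM q (\<lambda>_. d)" using loopM[OF q(1,2)] q(3,4) by simp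
    then have lc: "homotopic_paths SG l (\<lambda>_. d)" by (rule homotopic_paths_trans[OF q(5) homotopic_paths_subset[OF _ SMG]])
    have lse: "pathstart l = d" "pathfinish l = d" using l0 unfolding pathstart_def pathfinish_def by simp_all
    have rg: "path (reversepath g)" "path_image (reversepath g) \<subseteq> SG" using g by auto
    have cd: "path (\<lambda>_::real. d)" "path_image (\<lambda>_::real. d) \<subseteq> SG"
      using dM SMG by (auto simp: path_image_def path_def)
    have pg: "path (p +++ reversepath g)" "path_image (p +++ reversepath g) \<subseteq> SG"
      using p ps g apply simp
      by (rule subset_path_image_join[OF p(2) rg(2)])
    have s1: "homotopic_paths SG (reversepath g +++ l) (reversepath g +++ (\<lambda>_. d))"
      by (rule homotopic_paths_join) (use rg lc g lse in auto)
    have s2: "homotopic_paths SG (reversepath g +++ (\<lambda>_. d)) (reversepath g)"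
      using hp_rid_c[OF rg] g by simp
    have s3: "homotopic_paths SG (reversepath g +++ l) ((reversepath g +++ g) +++ (p +++ reversepath g))"
      unfolding l_def by (rule homotopic_paths_assoc) (use rg g pg ps in auto)
    have s4: "homotopic_paths SG ((reversepath g +++ g) +++ (p +++ reversepath g)) ((\<lambda>_. x) +++ (p +++ reversepath g))"
      by (rule homotopic_paths_join) (use hp_linv_c[OF g(1,2)] g pg ps in auto)
    have s5: "homotopic_paths SG ((\<lambda>_. x) +++ (p +++ reversepath g)) (p +++ reversepath g)"
      using hp_lid_c[OF pg] ps by simp
    have t1: "homotopic_paths SG (p +++ reversepath g) (reversepath g)"
      by (rule homotopic_paths_trans[OF homotopic_paths_sym[OF s5]
           homotopic_paths_trans[OF homotopic_paths_sym[OF s4]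
           homotopic_paths_trans[OF homotopic_paths_sym[OF s3]
           homotopic_paths_trans[OF s1 s2]]]])
    have t2: "homotopic_paths SG ((p +++ reversepath g) +++ g) (reversepath g +++ g)"
      by (rule homotopic_paths_join) (use t1 g in auto)
    have t3: "homotopic_paths SG (p +++ (reversepath g +++ g)) ((p +++ reversepath g) +++ g)"
      by (rule homotopic_paths_assoc) (use rg g p ps in auto)
    have t4: "homotopic_paths SG (p +++ (reversepath g +++ g)) (p +++ (\<lambda>_. x))"
      by (rule homotopic_paths_join) (use hp_linv_c[OF g(1,2)] g p ps in auto)
    have t5: "homotopic_paths SG (p +++ (\<lambda>_. x)) p"
      using hp_rid_c[OF p(1,2)] ps by simp
    have t6: "homotopic_paths SG (reversepath g +++ g) (\<lambda>_. x)"
      using hp_linv_c[OF g(1,2)] g(4) by simp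
    have "homotopic_paths SG p (\<lambda>_. x)"
      by (rule homotopic_paths_trans[OF homotopic_paths_sym[OF t5]
           homotopic_paths_trans[OF homotopic_paths_sym[OF t4]
           homotopic_paths_trans[OF t3
           homotopic_paths_trans[OF t2 t6]]]])
    then show ?thesis unfolding x_def .
  qed
  have A: "path_connected_space (geom_real (gen_morse_complex K))"
    unfolding geom_real_eq SG_def[symmetric] using pcG by simp
  have B: "\<forall>p. pathin (geom_real (gen_morse_complex K)) p \<and> p 1 = p 0 \<longrightarrow>
      path_homotopic (geom_real (gen_morse_complex K)) p (\<lambda>_. p 0)"
  proof (intro allI impI)
    fix p assume p: "pathin (geom_real (gen_morse_complex K)) p \<and> p 1 = p 0"
    then have pp: "path p" "\<forall>t\<in>{0..1}. p t \<in> SG" "p 1 = p 0" unfolding pathin_eq SG_def by simp_all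
    then have "path_image p \<subseteq> SG" unfolding path_image_def by blast
    then have "homotopic_paths SG p (\<lambda>_. p 0)" using loop pp(1,3) by blast
    then show "path_homotopic (geom_real (gen_morse_complex K)) p (\<lambda>_. p 0)"
      unfolding path_homotopic_eq SG_def .
  qed
  show ?thesis unfolding simply_connected_space_def using A B by blast
qed

theorem mainTheorem13:
  fixes K :: "'v set set"
  assumes "simplicial_complex K"
  shows "(\<forall>W. hasse_matching K W \<and> card W \<le> 2 \<longrightarrow> acyclic_matching K W)
    \<and> one_skeleton (morse_complex K) = one_skeleton (gen_morse_complex K)
    \<and> (\<forall>a \<in> topspace (geom_real (morse_complex K)).
         \<forall>p. pathin (geom_real (gen_morse_complex K)) p \<and> p 0 = a \<and> p 1 = a \<longrightarrow>
           (\<exists>q. pathin (geom_real (morse_complex K)) q \<and> q 0 = a \<and> q 1 = a \<and>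
                path_homotopic (geom_real (gen_morse_complex K)) p q))
    \<and> (simply_connected_space (geom_real (morse_complex K)) \<longrightarrow>
         simply_connected_space (geom_real (gen_morse_complex K)))"
proof -
  have A: "\<forall>W. hasse_matching K W \<and> card W \<le> 2 \<longrightarrow> acyclic_matching K W"
    using part1[OF assms] by blast
  have "W \<in> one_skeleton (morse_complex K) \<longleftrightarrow> W \<in> one_skeleton (gen_morse_complex K)" for W
  proof
    assume "W \<in> one_skeleton (morse_complex K)"
    then show "W \<in> one_skeleton (gen_morse_complex K)" using morse_sub unfolding one_skeleton_def by blast
  next
    assume w: "W \<in> one_skeleton (gen_morse_complex K)"
    then have "W \<noteq> {}" "hasse_matching K W" "card W \<le> 2" unfolding one_skeleton_def gen_morse_complex_def by auto
    then show "W \<in> one_skeleton (morse_complex K)" using A unfolding one_skeleton_def morse_complex_def by simp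
  qed
  then have B: "one_skeleton (morse_complex K) = one_skeleton (gen_morse_complex K)" by blast
  have C: "\<forall>a \<in> topspace (geom_real (morse_complex K)).
         \<forall>p. pathin (geom_real (gen_morse_complex K)) p \<and> p 0 = a \<and> p 1 = a \<longrightarrow>
           (\<exists>q. pathin (geom_real (morse_complex K)) q \<and> q 0 = a \<and> q 1 = a \<and>
                path_homotopic (geom_real (gen_morse_complex K)) p q)"
  proof (intro ballI allI impI)
    fix a p
    assume a: "a \<in> topspace (geom_real (morse_complex K))"
      and h: "pathin (geom_real (gen_morse_complex K)) p \<and> p 0 = a \<and> p 1 = a"
    have a': "a \<in> geom_real_set (morse_complex K)" using a unfolding geom_real_eq by simp
    have p': "path p" "\<forall>t\<in>{0..1}. p t \<in> geom_real_set (gen_morse_complex K)"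
      using h unfolding pathin_eq by auto
    have "p 0 = a" "p 1 = a" using h by auto
    then obtain q where "path q \<and> (\<forall>t\<in>{0..1}. q t \<in> geom_real_set (morse_complex K)) \<and> q 0 = a \<and> q 1 = a
        \<and> homotopic_paths (geom_real_set (gen_morse_complex K)) p q"
      using part3[OF assms a' p'] by blast
    then show "\<exists>q. pathin (geom_real (morse_complex K)) q \<and> q 0 = a \<and> q 1 = a \<and>
                path_homotopic (geom_real (gen_morse_complex K)) p q"
      unfolding pathin_eq path_homotopic_eq by (elim conjE) (intro exI conjI)
  qed
  have D: "simply_connected_space (geom_real (morse_complex K)) \<longrightarrow>
         simply_connected_space (geom_real (gen_morse_complex K))"
    using part4[OF assms] by (rule impI)
  show ?thesis using A B C D by (intro conjI)
qed

end
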